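(* Let $\nu>0$, $0<K<\nu^2/2$, and let $(\Phi_m)$ satisfy the standing assumptions in the context. Then $P(K)>Q(K)$, where $P(K):=\sup_{W\in\mathcal{C}_K}\mathcal{P}(W)$ and $Q(K):=\sup_{W\in\mathcal{C}_K}\mathcal{Q}(W)$.
   Context: $A_m f(\xi):=\int_{-m/2}^{m/2} f(\xi+s)\,ds$. $\Psi_m(r):=\Phi_m(\nu m-r)-\Phi_m(\nu m)+\Phi_m'(\nu m)r$ for $r\in[0,\nu m)$. $\mathcal{P}(W):=\int_{\mathbb{R}}\sum_{m\ge1}\Psi_m(A_mW(s))\,ds$ and $\mathcal{Q}(W):=\frac12\int_{\mathbb{R}}\sum_{m\ge1}\Phi_m''(\nu m)(A_mW(s))^2\,ds$. $\mathcal{C}$ is the $\mathsf{L}^2(\mathbb{R})$-closure of $\{W\in C_c^\infty(\mathbb{R}): W(x)=W(-x)\ge0,\ \dot W(x)=-\dot W(-x)\le0\ \forall x\ge0\}$; $\mathcal{C}_K:=\{W\in\mathcal{C}:\frac12\|W\|_2^2=K\}$. Standing assumptions: for every $m$, $\Phi_m:[0,\infty)\to[0,\infty)$, $\Phi_m\in C^4([0,\infty))$, $\Phi_m\ge0,\Phi_m'\le0,\Phi_m''\ge0,\Phi_m'''\le0,\Phi_m^{(4)}\ge0$, strict for $m=1$ and $s>0$; and for a fixed $\gamma\in(5/2,3)$ the series $\sum_m\Phi_m'(\nu m-\sqrt{2Km})m$, $\sum_m\Phi_m''(\nu m-\sqrt{2Km})m^2$, $\sum_m\Phi_m''(\nu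 m)m^\gamma$, $\sum_m\Phi_m'''(\nu m-\sqrt{2Km})m^{3/2}$ are finite. *)

theory Defs
  imports "HOL-Analysis.Analysis"
begin

text \<open>k-th derivative (two-sided; used only at interior points x > 0).\<close>
definition hderiv :: "(real \<Rightarrow> real) \<Rightarrow> nat \<Rightarrow> real \<Rightarrow> real" where
  "hderiv f k = (deriv ^^ k) f"

definition C4_nonneg :: "(real \<Rightarrow> real) \<Rightarrow> bool" where
  "C4_nonneg f \<longleftrightarrow> (\<exists>d :: nat \<Rightarrow> real \<Rightarrow> real. d 0 = f \<and>
     (\<forall>k<4. \<forall>x\<ge>0. (d k has_real_derivative d (Suc k) x) (at x within {0..})) \<and>
     continuous_on {0..} (d 4))"

definition Aop :: "nat \<Rightarrow> (real \<Rightarrow> real) \<Rightarrow> real \<Rightarrow> real" where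
  "Aop m f \<xi> = set_lebesgue_integral lborel {-(real m)/2..(real m)/2} (\<lambda>s. f (\<xi> + s))"

definition Psi :: "(nat \<Rightarrow> real \<Rightarrow> real) \<Rightarrow> real \<Rightarrow> nat \<Rightarrow> real \<Rightarrow> real" where
  "Psi \<Phi> \<nu> m r = \<Phi> m (\<nu> * real m - r) - \<Phi> m (\<nu> * real m) + hderiv (\<Phi> m) 1 (\<nu> * real m) * r"

text \<open>The functionals P and Q (integrands are nonnegative on the cone; sum over m \<ge> 1).\<close>
definition Pfun :: "(nat \<Rightarrow> real \<Rightarrow> real) \<Rightarrow> real \<Rightarrow> (real \<Rightarrow> real) \<Rightarrow> ennreal" where
  "Pfun \<Phi> \<nu> W = (\<integral>\<^sup>+ s. (\<Sum>m. ennreal (Psi \<Phi> \<nu> (Suc m) (Aop (Suc m) W s))) \<partial>lborel)"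

definition Qfun :: "(nat \<Rightarrow> real \<Rightarrow> real) \<Rightarrow> real \<Rightarrow> (real \<Rightarrow> real) \<Rightarrow> ennreal" where
  "Qfun \<Phi> \<nu> W = (\<integral>\<^sup>+ s. (\<Sum>m. ennreal (1/2 * hderiv (\<Phi> (Suc m)) 2 (\<nu> * real (Suc m))
                                     * (Aop (Suc m) W s)\<^sup>2)) \<partial>lborel)"

definition cone_gen :: "(real \<Rightarrow> real) set" where
  "cone_gen = {W. (\<forall>k x. (deriv ^^ k) W differentiable (at x)) \<and>
                  (\<exists>R. \<forall>x. \<bar>x\<bar> > R \<longrightarrow> W x = 0) \<and>
                  (\<forall>x\<ge>0. W x = W (-x) \<and> W (-x) \<ge> 0 \<and>
                          deriv W x = - deriv W (-x) \<and> - deriv W (-x) \<le> 0)}"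

definition cone :: "(real \<Rightarrow> real) set" where
  "cone = {W. W \<in> borel_measurable lborel \<and> integrable lborel (\<lambda>x. (W x)\<^sup>2) \<and>
              (\<exists>V :: nat \<Rightarrow> real \<Rightarrow> real. (\<forall>n. V n \<in> cone_gen) \<and>
                 (\<lambda>n. integral\<^sup>L lborel (\<lambda>x. (V n x - W x)\<^sup>2)) \<longlonglongrightarrow> 0)}"

definition coneK :: "real \<Rightarrow> (real \<Rightarrow> real) set" where
  "coneK K = {W \<in> cone. (1/2) * integral\<^sup>L lborel (\<lambda>x. (W x)\<^sup>2) = K}"

end

theory Submission
  imports Defs "HOL-Computational_Algebra.Polynomial"
begin

definition fb :: "real poly \<Rightarrow> real \<Rightarrow> real" where
  "fb P y = (if y > 0 then poly P (1/y) * exp (-1/y) else 0)"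

definition dP :: "real poly \<Rightarrow> real poly" where
  "dP P = [:0,0,1:] * (P - pderiv P)"

lemma fb_lim: fixes P :: "real poly" shows "((\<lambda>z. poly P z * z * exp(-z)) \<longlongrightarrow> 0) at_top"
proof -
  have eq: "(\<lambda>z. poly P z * z * exp(-z)) = (\<lambda>z. \<Sum>i\<le>degree P. coeff P i * (z ^ Suc i / exp z))"
  proof
    fix z :: real
    have "poly P z * z * exp(-z) = (\<Sum>i\<le>degree P. coeff P i * z^i) * z / exp z"
      by (simp add: poly_altdef exp_minus divide_inverse)
    also have "\<dots> = (\<Sum>i\<le>degree P. coeff P i * z^i * z / exp z)"
      by (simp add: sum_distrib_right sum_divide_distrib)
    also have "\<dots> = (\<Sum>i\<le>degree P. coeff P i * (z ^ Suc i / exp z))"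
      by (rule sum.cong) auto
    finally show "poly P z * z * exp(-z) = (\<Sum>i\<le>degree P. coeff P i * (z ^ Suc i / exp z))" .
  qed
  have "((\<lambda>z. \<Sum>i\<le>degree P. coeff P i * (z ^ Suc i / exp z)) \<longlongrightarrow> (\<Sum>i\<le>degree P. coeff P i * 0)) at_top"
    by (intro tendsto_sum tendsto_mult tendsto_const tendsto_power_div_exp_0)
  then show ?thesis unfolding eq by simp
qed

lemma fb_deriv: "(fb P has_real_derivative fb (dP P) y) (at y)"
proof -
  consider "y > 0" | "y < 0" | "y = 0" by linarith
  then show ?thesis
  proof cases
    case 1
    have d: "((\<lambda>y. poly P (1/y) * exp (-1/y)) has_real_derivative fb (dP P) y) (at y)"
    proof -
      have "((\<lambda>y. poly P (1/y) * exp (-1/y)) has_real_derivative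
          (poly (pderiv P) (1/y) * (- 1 / y^2)) * exp (-1/y) + poly P (1/y) * (exp (-1/y) * (1/y^2))) (at y)"
        using 1
        by (auto intro!: derivative_eq_intros DERIV_chain2[where f="poly P"] poly_DERIV
             simp: power2_eq_square field_simps)
      moreover have "(poly (pderiv P) (1/y) * (- 1 / y^2)) * exp (-1/y) + poly P (1/y) * (exp (-1/y) * (1/y^2)) = fb (dP P) y"
        using 1 by (simp add: fb_def dP_def field_simps power2_eq_square)
      ultimately show ?thesis by simp
    qed
    show ?thesis
      by (rule has_field_derivative_transform_within_open[OF d, of "{0<..}"]) (use 1 in \<open>auto simp: fb_def\<close>)
  next
    case 2
    have d: "((\<lambda>y. 0) has_real_derivative fb (dP P) y) (at y)"
      using 2 by (simp add: fb_def)
    show ?thesis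
      by (rule has_field_derivative_transform_within_open[OF d, of "{..<0}"]) (use 2 in \<open>auto simp: fb_def\<close>)
  next
    case 3
    have "((\<lambda>h. (fb P (0 + h) - fb P 0) / h) \<longlongrightarrow> 0) (at 0)"
    proof (rule filterlim_split_at_real)
      have ev: "eventually (\<lambda>h::real. h < 0) (at_left 0)"
        by (simp add: eventually_at_filter)
      have "eventually (\<lambda>h. (fb P (0 + h) - fb P 0) / h = 0) (at_left 0)"
        using ev by eventually_elim (simp add: fb_def)
      then show "((\<lambda>h. (fb P (0 + h) - fb P 0) / h) \<longlongrightarrow> 0) (at_left 0)"
        by (rule tendsto_eventually)
      have lim: "((\<lambda>z. poly P z * z * exp(-z)) \<longlongrightarrow> 0) at_top" by (rule fb_lim)
      have "eventually (\<lambda>z::real. z > 0) at_top" by (rule eventually_gt_at_top)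
      then have "eventually (\<lambda>z. poly P z * z * exp(-z) = (fb P (inverse z) - fb P 0) / inverse z) at_top"
      proof eventually_elim
        case (elim z)
        then show ?case by (simp add: fb_def divide_inverse)
      qed
      then have L2: "((\<lambda>z. (fb P (inverse z) - fb P 0) / inverse z) \<longlongrightarrow> 0) at_top"
        using lim by (rule Lim_transform_eventually[rotated])
      have "((\<lambda>h. (fb P h - fb P 0) / h) \<longlongrightarrow> 0) (at_right 0)"
        using filterlim_compose[OF L2 filterlim_inverse_at_top_right] by simp
      then show "((\<lambda>h. (fb P (0 + h) - fb P 0) / h) \<longlongrightarrow> 0) (at_right 0)"
        by simp
    qed
    then have "((\<lambda>h. (fb P (y + h) - fb P y) / h) \<longlongrightarrow> fb (dP P) y) (at 0)"
      using 3 by (simp add: fb_def)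
    then show ?thesis by (simp only: DERIV_def)
  qed
qed

definition smooth_fam :: "(real \<Rightarrow> real) set \<Rightarrow> bool" where
  "smooth_fam S \<longleftrightarrow> (\<forall>g\<in>S. \<exists>g'\<in>S. \<forall>x. (g has_real_derivative g' x) (at x))"

lemma smooth_fam_deriv:
  assumes S: "smooth_fam S" and g: "g \<in> S"
  shows "(deriv ^^ k) g differentiable (at x)"
proof -
  have inS: "(deriv ^^ k) g \<in> S" for k
  proof (induction k)
    case 0 then show ?case using g by simp
  next
    case (Suc k)
    then obtain g' where "g' \<in> S" "\<forall>x. ((deriv ^^ k) g has_real_derivative g' x) (at x)"
      using S unfolding smooth_fam_def by blast
    moreover then have "deriv ((deriv ^^ k) g) = g'" by (intro ext DERIV_imp_deriv) auto
    ultimately show ?case by simp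
  qed
  then obtain g' where "\<forall>x. ((deriv ^^ k) g has_real_derivative g' x) (at x)"
    using S unfolding smooth_fam_def by blast
  then show ?thesis using real_differentiable_def
    by (meson has_field_derivative_imp_has_derivative differentiableI)
qed

definition evl :: "real poly \<Rightarrow> (real poly \<times> real poly) list \<Rightarrow> real \<Rightarrow> real" where
  "evl p xs x = sum_list (map (\<lambda>(P,Q). fb P (poly p x) * poly Q x) xs)"

definition dl :: "real poly \<Rightarrow> (real poly \<times> real poly) list \<Rightarrow> (real poly \<times> real poly) list" where
  "dl p xs = concat (map (\<lambda>(P,Q). [(dP P, pderiv p * Q), (P, pderiv Q)]) xs)"

lemma evl_deriv: "(evl p xs has_real_derivative evl p (dl p xs) x) (at x)"
proof (induction xs)
  case Nil
  then show ?case by (simp add: evl_def dl_def)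
next
  case (Cons a xs)
  obtain P Q where a: "a = (P,Q)" by force
  have d1: "((\<lambda>x. fb P (poly p x) * poly Q x) has_real_derivative
      fb (dP P) (poly p x) * poly (pderiv p) x * poly Q x + fb P (poly p x) * poly (pderiv Q) x) (at x)"
    by (rule derivative_eq_intros DERIV_chain2[OF fb_deriv] poly_DERIV | simp)+
  have "((\<lambda>x. fb P (poly p x) * poly Q x + evl p xs x) has_real_derivative
      (fb (dP P) (poly p x) * poly (pderiv p) x * poly Q x + fb P (poly p x) * poly (pderiv Q) x) + evl p (dl p xs) x) (at x)"
    by (rule DERIV_add[OF d1 Cons.IH])
  moreover have "(\<lambda>x. fb P (poly p x) * poly Q x + evl p xs x) = evl p (a # xs)"
    by (rule ext) (simp add: evl_def a)
  moreover have "(fb (dP P) (poly p x) * poly (pderiv p) x * poly Q x + fb P (poly p x) * poly (pderiv Q) x) + evl p (dl p xs) x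
      = evl p (dl p (a # xs)) x"
    by (simp add: evl_def dl_def a algebra_simps)
  ultimately show ?case by simp
qed

lemma smooth_evl: "smooth_fam (range (evl p))"
  unfolding smooth_fam_def using evl_deriv by blast

definition Vf :: "real \<Rightarrow> real \<Rightarrow> real \<Rightarrow> real \<Rightarrow> real" where
  "Vf h a L x = h * fb [:1:] (a * (L^2 - x^2))"

lemma Vf_evl: "Vf h a L = evl [:a * L^2, 0, -a:] [([:1:], [:h:])]"
  by (rule ext) (simp add: Vf_def evl_def algebra_simps power2_eq_square)

lemma Vf_smooth: "(deriv ^^ k) (Vf h a L) differentiable (at x)"
  unfolding Vf_evl by (rule smooth_fam_deriv[OF smooth_evl, of _ "[:a * L^2, 0, -a:]"]) (rule rangeI)

lemma fb_nonneg: "fb [:1:] y \<ge> 0" "fb [:0,0,1:] y \<ge> 0"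
  by (auto simp: fb_def)

lemma fb_le1: "fb [:1:] y \<le> 1"
  by (auto simp: fb_def)

lemma Vf_deriv: "deriv (Vf h a L) x = h * fb [:0,0,1:] (a * (L^2 - x^2)) * (- 2 * a * x)"
proof -
  have "(Vf h a L has_real_derivative h * (fb (dP [:1:]) (a * (L^2 - x^2)) * (a * (0 - 2 * x))))  (at x)"
    unfolding Vf_def
    by (rule derivative_eq_intros DERIV_chain2[OF fb_deriv] | simp)+
  moreover have "dP [:1:] = [:0,0,1:]" by (simp add: dP_def)
  ultimately show ?thesis by (intro DERIV_imp_deriv) (simp add: algebra_simps)
qed

lemma Vf_cone_gen:
  assumes "h \<ge> 0" "a > 0"
  shows "Vf h a L \<in> cone_gen"
proof -
  have supp: "\<forall>x. \<bar>x\<bar> > \<bar>L\<bar> \<longrightarrow> Vf h a L x = 0"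
  proof (intro allI impI)
    fix x assume "\<bar>x\<bar> > \<bar>L\<bar>"
    then have "L^2 < x^2" by (metis abs_le_square_iff not_le)
    then have "a * (L^2 - x^2) \<le> 0" using assms by (simp add: mult_nonneg_nonpos)
    then show "Vf h a L x = 0" by (simp add: Vf_def fb_def)
  qed
  show ?thesis unfolding cone_gen_def
    using supp Vf_smooth assms
    by (auto simp: Vf_deriv Vf_def fb_nonneg intro!: mult_nonneg_nonneg)
qed

definition Wb :: "real \<Rightarrow> real \<Rightarrow> real \<Rightarrow> real" where
  "Wb h L x = h * indicator {-L<..<L} x"

lemma Wb_meas[measurable]: "Wb h L \<in> borel_measurable lborel"
  unfolding Wb_def by measurable

lemma Wb_sq: "(Wb h L x)^2 = h^2 * indicator {-L<..<L} x"
  by (simp add: Wb_def indicator_def power_mult_distrib)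

lemma Wb_sq_int: "L > 0 \<Longrightarrow> integrable lborel (\<lambda>x. (Wb h L x)^2)"
  unfolding Wb_sq by (intro integrable_mult_right) (simp add: integrable_indicator_iff)

lemma Wb_sq_integral: "L > 0 \<Longrightarrow> integral\<^sup>L lborel (\<lambda>x. (Wb h L x)^2) = h^2 * (2 * L)"
  unfolding Wb_sq by simp

lemma Vf_meas: "Vf h a L \<in> borel_measurable lborel"
proof -
  have "continuous_on UNIV (Vf h a L)"
    using Vf_smooth[of 0 h a L]
    by (intro continuous_at_imp_continuous_on) (auto intro: differentiable_imp_continuous_within)
  then show ?thesis using borel_measurable_continuous_onI by simp
qed

lemma Vf_conv:
  assumes h: "h \<ge> 0" and L: "L > 0"
  shows "(\<lambda>n. integral\<^sup>L lborel (\<lambda>x. (Vf h (real (Suc n)) L x - Wb h L x)^2)) \<longlonglongrightarrow> 0"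
proof -
  have p1: "(\<lambda>x. 0::real) \<in> borel_measurable lborel" by simp
    have p2: "\<And>n. (\<lambda>x. (Vf h (real (Suc n)) L x - Wb h L x)^2) \<in> borel_measurable lborel"
      using Vf_meas by measurable
    have p3: "integrable lborel (\<lambda>x. h^2 * indicator {-L<..<L} x)"
      by (intro integrable_mult_right) (use L in \<open>simp add: integrable_indicator_iff\<close>)
    have p4: "AE x in lborel. (\<lambda>n. (Vf h (real (Suc n)) L x - Wb h L x)^2) \<longlonglongrightarrow> 0"
    proof (rule AE_I2)
      fix x :: real
      show "(\<lambda>n. (Vf h (real (Suc n)) L x - Wb h L x)^2) \<longlonglongrightarrow> 0"
      proof (cases "x \<in> {-L<..<L}")
        case True
        then have "\<bar>x\<bar> < \<bar>L\<bar>" by auto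
        then have c: "L^2 - x^2 > 0" using abs_le_square_iff[of L x] by linarith
        have eq: "(Vf h (real (Suc n)) L x - Wb h L x)^2 = (h * exp (- (1 / (L^2 - x^2)) * inverse (real (Suc n))) - h)^2" for n
        proof -
          have pos: "real (Suc n) * (L^2 - x^2) > 0" using c by simp
          have e: "1 / (real (Suc n) * (L^2 - x^2)) = inverse (real (Suc n)) / (L^2 - x^2)"
            by (simp add: divide_inverse mult_ac del: of_nat_Suc)
          show ?thesis using True pos by (simp add: Vf_def Wb_def fb_def e del: of_nat_Suc)
        qed
        have "(\<lambda>n. (h * exp (- (1 / (L^2 - x^2)) * inverse (real (Suc n))) - h)^2) \<longlonglongrightarrow> (h * exp (- (1 / (L^2 - x^2)) * 0) - h)^2"
          by (intro tendsto_intros LIMSEQ_inverse_real_of_nat)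
        then show ?thesis unfolding eq by simp
      next
        case False
        then have "\<bar>x\<bar> \<ge> \<bar>L\<bar>" using L by auto
        then have "L^2 - x^2 \<le> 0" by (simp add: abs_le_square_iff)
        then have np: "\<not> 0 < real (Suc n) * (L^2 - x^2)" for n
          by (simp add: mult_nonneg_nonpos not_less del: of_nat_Suc)
        have "(Vf h (real (Suc n)) L x - Wb h L x)^2 = 0" for n
          using False np[of n] by (simp add: Vf_def Wb_def fb_def del: of_nat_Suc)
        then show ?thesis by simp
      qed
    qed
    have p5: "AE x in lborel. norm ((Vf h (real (Suc n)) L x - Wb h L x)^2) \<le> h^2 * indicator {-L<..<L} x" for n
    proof (rule AE_I2)
      fix x :: real
      have v0: "0 \<le> Vf h (real (Suc n)) L x" and v1: "Vf h (real (Suc n)) L x \<le> h"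
        using fb_nonneg(1) fb_le1 h unfolding Vf_def
        by (auto intro: mult_nonneg_nonneg mult_left_le)
      show "norm ((Vf h (real (Suc n)) L x - Wb h L x)^2) \<le> h^2 * indicator {-L<..<L} x"
      proof (cases "x \<in> {-L<..<L}")
        case True
        then have "\<bar>Vf h (real (Suc n)) L x - Wb h L x\<bar> \<le> \<bar>h\<bar>" using v0 v1 h by (simp add: Wb_def)
        then have "(Vf h (real (Suc n)) L x - Wb h L x)^2 \<le> h^2" by (simp add: abs_le_square_iff)
        then show ?thesis using True by simp
      next
        case False
        then have "\<bar>x\<bar> \<ge> \<bar>L\<bar>" using L by auto
        then have "L^2 - x^2 \<le> 0" by (simp add: abs_le_square_iff)
        then have np: "\<not> 0 < real (Suc n) * (L^2 - x^2)"
          by (simp add: mult_nonneg_nonpos not_less del: of_nat_Suc)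
        have "(Vf h (real (Suc n)) L x - Wb h L x)^2 = 0"
          using False np by (simp add: Vf_def Wb_def fb_def del: of_nat_Suc)
        then show ?thesis using False by simp
      qed
    qed
  from integral_dominated_convergence[OF p1 p2 p3 p4 p5] show ?thesis by simp
qed

lemma Wb_coneK:
  assumes h: "h \<ge> 0" and L: "L > 0" and K: "h^2 * L = K"
  shows "Wb h L \<in> coneK K"
  unfolding coneK_def cone_def
  using Wb_sq_int[OF L] Wb_sq_integral[OF L, of h] Vf_cone_gen[OF h] Vf_conv[OF h L] K
  by (auto intro!: exI[of _ "\<lambda>n. Vf h (real (Suc n)) L"])

lemma C4_derivs:
  assumes "C4_nonneg f"
  obtains d where "d 0 = f" "\<And>k x. k < 4 \<Longrightarrow> x > 0 \<Longrightarrow> (d k has_real_derivative d (Suc k) x) (at x)"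
    "\<And>k x. k \<le> 4 \<Longrightarrow> x > 0 \<Longrightarrow> hderiv f k x = d k x"
proof -
  obtain d where d0: "d 0 = f" and dd: "\<forall>k<4. \<forall>x\<ge>0. (d k has_real_derivative d (Suc k) x) (at x within {0..})"
    using assms unfolding C4_nonneg_def by blast
  have da: "(d k has_real_derivative d (Suc k) x) (at x)" if "k < 4" "x > 0" for k x
  proof -
    have "(d k has_real_derivative d (Suc k) x) (at x within {0..})"
      using dd that by simp
    then have "(d k has_real_derivative d (Suc k) x) (at x within {0<..})"
      by (rule DERIV_subset) auto
    then show ?thesis using at_within_open[of x "{0<..}"] that by simp
  qed
  have hd: "\<forall>x>0. (deriv ^^ k) f x = d k x" if "k \<le> 4" for k
    using that
  proof (induction k)
    case 0 then show ?case by (simp add: d0)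
  next
    case (Suc k)
    show ?case
    proof (intro allI impI)
      fix x :: real assume x: "x > 0"
      have "((deriv ^^ k) f has_real_derivative d (Suc k) x) (at x)"
        by (rule has_field_derivative_transform_within_open[OF da[of k x], of "{0<..}"])
           (use Suc x in auto)
      then show "(deriv ^^ Suc k) f x = d (Suc k) x"
        by (simp add: DERIV_imp_deriv)
    qed
  qed
  show ?thesis
    by (rule that[OF d0 da]) (use hd in \<open>auto simp: hderiv_def\<close>)
qed

lemma taylor_bound:
  assumes d0: "d 0 = f" and da: "\<And>k x. k < 4 \<Longrightarrow> x > 0 \<Longrightarrow> (d k has_real_derivative d (Suc k) x) (at x)"
    and d4: "\<And>x. x > 0 \<Longrightarrow> d 4 x \<ge> 0"
    and r: "0 \<le> r" "r < a"
  shows "f (a - r) - f a + d 1 a * r \<ge> 1/2 * d 2 a * r^2 - d 3 a / 6 * r^3"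
proof (cases "r = 0")
  case True then show ?thesis by simp
next
  case False
  then have r0: "r > 0" using r by simp
  have "\<exists>t. a - r < t \<and> t < a \<and>
    f (a - r) = (\<Sum>m<4. (d m a / fact m) * ((a - r) - a)^m) + (d 4 t / fact 4) * ((a - r) - a)^4"
  proof (rule Taylor_down[where diff=d and f=f])
    show "\<forall>m t. m < 4 \<and> a - r \<le> t \<and> t \<le> a \<longrightarrow> DERIV (d m) t :> d (Suc m) t"
    proof (intro allI impI)
      fix m :: nat and t :: real assume mt: "m < 4 \<and> a - r \<le> t \<and> t \<le> a"
      then have "t > 0" using r by linarith
      then show "DERIV (d m) t :> d (Suc m) t" using da mt by blast
    qed
  qed (use r0 d0 in simp_all)
  then obtain t where t: "a - r < t" "t < a"
    and eq: "f (a - r) = (\<Sum>m<4. (d m a / fact m) * ((a - r) - a)^m) + (d 4 t / fact 4) * ((a - r) - a)^4"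
    by blast
  have "(\<Sum>m<4. (d m a / fact m) * ((a - r) - a)^m) = d 0 a - d 1 a * r + d 2 a / 2 * r^2 - d 3 a / 6 * r^3"
    by (simp add: eval_nat_numeral fact_numeral power2_eq_square power3_eq_cube)
  moreover have "d 4 t / fact 4 * ((a - r) - a)^4 \<ge> 0"
    using d4[of t] t r by simp
  ultimately show ?thesis using eq d0 by simp
qed

lemma Aop_sq_bound:
  fixes W :: "real \<Rightarrow> real"
  assumes Wm[measurable]: "W \<in> borel_measurable borel" and m: "m > 0"
  shows "ennreal ((Aop m W s)^2) \<le> ennreal (real m) *
    (\<integral>\<^sup>+t. indicator {-(real m)/2..(real m)/2} t * ennreal ((W (s+t))^2) \<partial>lborel)"
proof -
  define I where "I = {-(real m)/2..(real m)/2}"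
  define g where "g = (\<lambda>t. indicator I t *\<^sub>R W (s+t))"
  have gm[measurable]: "(\<lambda>t. W (s + t)) \<in> borel_measurable borel"
    using Wm by measurable
  have Aeq: "Aop m W s = integral\<^sup>L lborel g"
    by (simp add: Aop_def set_lebesgue_integral_def g_def I_def)
  have n1: "ennreal \<bar>Aop m W s\<bar> \<le> (\<integral>\<^sup>+t. ennreal \<bar>W (s+t)\<bar> * indicator I t \<partial>lborel)"
  proof (cases "integrable lborel g")
    case True
    have "ennreal (norm (integral\<^sup>L lborel g)) \<le> (\<integral>\<^sup>+t. ennreal (norm (g t)) \<partial>lborel)"
      using integral_norm_bound_ennreal[OF True] by simp
    also have "\<dots> = (\<integral>\<^sup>+t. ennreal \<bar>W (s+t)\<bar> * indicator I t \<partial>lborel)"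
      by (intro nn_integral_cong) (auto simp: g_def indicator_def)
    finally show ?thesis using Aeq by simp
  next
    case False
    then show ?thesis using Aeq by (simp add: not_integrable_integral_eq)
  qed
  have cs: "(\<integral>\<^sup>+t. (ennreal \<bar>W (s+t)\<bar> * indicator I t) * indicator I t \<partial>lborel)^2 \<le>
      (\<integral>\<^sup>+t. (ennreal \<bar>W (s+t)\<bar> * indicator I t)^2 \<partial>lborel) * (\<integral>\<^sup>+t. (indicator I t)^2 \<partial>lborel)"
    by (rule Cauchy_Schwarz_nn_integral) (auto simp: I_def)
  have e1: "(\<integral>\<^sup>+t. (ennreal \<bar>W (s+t)\<bar> * indicator I t) * indicator I t \<partial>lborel)
      = (\<integral>\<^sup>+t. ennreal \<bar>W (s+t)\<bar> * indicator I t \<partial>lborel)"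
    by (intro nn_integral_cong) (auto simp: indicator_def)
  have e2: "(\<integral>\<^sup>+t. (ennreal \<bar>W (s+t)\<bar> * indicator I t)^2 \<partial>lborel)
      = (\<integral>\<^sup>+t. indicator I t * ennreal ((W (s+t))^2) \<partial>lborel)"
    by (intro nn_integral_cong) (auto simp: indicator_def ennreal_power power2_abs)
  have e3: "(\<integral>\<^sup>+t. (indicator I t)^2 \<partial>lborel) = ennreal (real m)"
  proof -
    have "(\<integral>\<^sup>+t. (indicator I t)^2 \<partial>lborel) = (\<integral>\<^sup>+t. indicator I t \<partial>lborel)"
      by (intro nn_integral_cong) (auto simp: indicator_def)
    also have "\<dots> = emeasure lborel I" by (simp add: I_def)
    also have "\<dots> = ennreal (real m)" by (simp add: I_def)
    finally show ?thesis .
  qed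
  have "ennreal ((Aop m W s)^2) = (ennreal \<bar>Aop m W s\<bar>)^2"
    by (simp add: ennreal_power power2_abs)
  also have "\<dots> \<le> (\<integral>\<^sup>+t. ennreal \<bar>W (s+t)\<bar> * indicator I t \<partial>lborel)^2"
    using n1 by (intro power_mono) auto
  also have "\<dots> \<le> (\<integral>\<^sup>+t. indicator I t * ennreal ((W (s+t))^2) \<partial>lborel) * ennreal (real m)"
    using cs unfolding e1 e2 e3 .
  finally show ?thesis by (simp add: I_def mult.commute)
qed

lemma shift_integral:
  fixes W :: "real \<Rightarrow> real"
  assumes Wm[measurable]: "W \<in> borel_measurable borel" and Wi: "integrable lborel (\<lambda>x. (W x)^2)"
  shows "(\<integral>\<^sup>+s. ennreal ((W (s+t))^2) \<partial>lborel) = ennreal (integral\<^sup>L lborel (\<lambda>x. (W x)^2))"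
proof -
  have m: "(\<lambda>x. ennreal ((W x)^2)) \<in> borel_measurable borel" using Wm by measurable
  have "(\<integral>\<^sup>+s. ennreal ((W (s+t))^2) \<partial>lborel) = (\<integral>\<^sup>+x. ennreal ((W (t + 1 * x))^2) \<partial>lborel)"
    by (simp add: add.commute)
  then have "(\<integral>\<^sup>+s. ennreal ((W (s+t))^2) \<partial>lborel) = (\<integral>\<^sup>+x. ennreal ((W x)^2) \<partial>lborel)"
    using nn_integral_real_affine[OF m, of 1 t] by simp
  also have "\<dots> = ennreal (integral\<^sup>L lborel (\<lambda>x. (W x)^2))"
    by (rule nn_integral_eq_integral[OF Wi]) simp
  finally show ?thesis .
qed

lemma double_integral:
  fixes W :: "real \<Rightarrow> real"
  assumes Wm[measurable]: "W \<in> borel_measurable borel" and Wi: "integrable lborel (\<lambda>x. (W x)^2)"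
  shows "(\<integral>\<^sup>+s. (\<integral>\<^sup>+t. indicator {-(real m)/2..(real m)/2} t * ennreal ((W (s+t))^2) \<partial>lborel) \<partial>lborel)
    = ennreal (real m) * ennreal (integral\<^sup>L lborel (\<lambda>x. (W x)^2))"
proof -
  define I where "I = {-(real m)/2..(real m)/2}"
  have pm: "(\<lambda>(s,t). indicator I t * ennreal ((W (s+t))^2)) \<in> borel_measurable (lborel \<Otimes>\<^sub>M lborel)"
    using Wm unfolding I_def by measurable
  have "(\<integral>\<^sup>+s. (\<integral>\<^sup>+t. indicator I t * ennreal ((W (s+t))^2) \<partial>lborel) \<partial>lborel)
      = (\<integral>\<^sup>+t. (\<integral>\<^sup>+s. indicator I t * ennreal ((W (s+t))^2) \<partial>lborel) \<partial>lborel)"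
    using lborel_pair.Fubini'[OF pm] by simp
  also have "\<dots> = (\<integral>\<^sup>+t. indicator I t * ennreal (integral\<^sup>L lborel (\<lambda>x. (W x)^2)) \<partial>lborel)"
  proof (intro nn_integral_cong)
    fix t :: real
    have "(\<integral>\<^sup>+s. indicator I t * ennreal ((W (s+t))^2) \<partial>lborel) = indicator I t * (\<integral>\<^sup>+s. ennreal ((W (s+t))^2) \<partial>lborel)"
      using Wm by (intro nn_integral_cmult) measurable
    then show "(\<integral>\<^sup>+s. indicator I t * ennreal ((W (s+t))^2) \<partial>lborel) = indicator I t * ennreal (integral\<^sup>L lborel (\<lambda>x. (W x)^2))"
      using shift_integral[OF Wm Wi, of t] by simp
  qed
  also have "\<dots> = ennreal (integral\<^sup>L lborel (\<lambda>x. (W x)^2)) * emeasure lborel I"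
    by (subst mult.commute) (simp add: nn_integral_cmult I_def)
  also have "\<dots> = ennreal (real m) * ennreal (integral\<^sup>L lborel (\<lambda>x. (W x)^2))"
    by (simp add: I_def mult.commute)
  finally show ?thesis unfolding I_def .
qed

lemma Qbound:
  fixes W :: "real \<Rightarrow> real" and c :: "nat \<Rightarrow> real"
  assumes W: "W \<in> coneK K" and c0: "\<And>m. c m \<ge> 0"
    and cs: "summable (\<lambda>m. c m * (real (Suc m))^2)"
  shows "(\<integral>\<^sup>+ s. (\<Sum>m. ennreal (1/2 * c m * (Aop (Suc m) W s)^2)) \<partial>lborel)
     \<le> ennreal (K * (\<Sum>m. c m * (real (Suc m))^2))"
proof -
  have Wm[measurable]: "W \<in> borel_measurable borel" and Wi: "integrable lborel (\<lambda>x. (W x)^2)"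
    and WK: "integral\<^sup>L lborel (\<lambda>x. (W x)^2) = 2 * K"
    using W by (auto simp: coneK_def cone_def)
  have K0: "K \<ge> 0" using WK integral_nonneg_AE[of "\<lambda>x. (W x)^2" lborel] by simp
  define F where "F m s = (\<integral>\<^sup>+t. indicator {-(real (Suc m))/2..(real (Suc m))/2} t * ennreal ((W (s+t))^2) \<partial>lborel)" for m s
  have Fm[measurable]: "(\<lambda>s. F m s) \<in> borel_measurable lborel" for m
    unfolding F_def by measurable
  have pw: "(\<Sum>m. ennreal (1/2 * c m * (Aop (Suc m) W s)^2)) \<le> (\<Sum>m. ennreal (1/2 * c m * real (Suc m)) * F m s)" for s
  proof (rule suminf_le[OF _ summableI summableI])
    fix m
    have "ennreal (1/2 * c m * (Aop (Suc m) W s)^2) = ennreal (1/2 * c m) * ennreal ((Aop (Suc m) W s)^2)"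
      by (rule ennreal_mult') (use c0[of m] in simp)
    also have "\<dots> \<le> ennreal (1/2 * c m) * (ennreal (real (Suc m)) * F m s)"
      using Aop_sq_bound[OF Wm, of "Suc m" s] unfolding F_def by (intro mult_left_mono) auto
    also have "\<dots> = ennreal (1/2 * c m * real (Suc m)) * F m s"
    proof -
      have "ennreal (1/2 * c m * real (Suc m)) = ennreal (1/2 * c m) * ennreal (real (Suc m))"
        by (rule ennreal_mult') (use c0[of m] in simp)
      then show ?thesis by (simp only: mult.assoc)
    qed
    finally show "ennreal (1/2 * c m * (Aop (Suc m) W s)^2) \<le> ennreal (1/2 * c m * real (Suc m)) * F m s" .
  qed
  have "(\<integral>\<^sup>+ s. (\<Sum>m. ennreal (1/2 * c m * (Aop (Suc m) W s)^2)) \<partial>lborel)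
      \<le> (\<integral>\<^sup>+ s. (\<Sum>m. ennreal (1/2 * c m * real (Suc m)) * F m s) \<partial>lborel)"
    by (intro nn_integral_mono pw)
  also have "\<dots> = (\<Sum>m. (\<integral>\<^sup>+ s. ennreal (1/2 * c m * real (Suc m)) * F m s \<partial>lborel))"
    by (rule nn_integral_suminf) measurable
  also have "\<dots> = (\<Sum>m. ennreal (1/2 * c m * real (Suc m)) * (\<integral>\<^sup>+ s. F m s \<partial>lborel))"
    by (intro suminf_cong nn_integral_cmult) measurable
  also have "\<dots> = (\<Sum>m. ennreal (K * (c m * (real (Suc m))^2)))"
  proof (intro suminf_cong)
    fix m
    have "(\<integral>\<^sup>+ s. F m s \<partial>lborel) = ennreal (real (Suc m)) * ennreal (2 * K)"
      unfolding F_def using double_integral[OF Wm Wi, of "Suc m"] WK by simp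
    also have "\<dots> = ennreal (real (Suc m) * (2 * K))"
      by (rule ennreal_mult[symmetric]) (use K0 in auto)
    finally have "ennreal (1/2 * c m * real (Suc m)) * (\<integral>\<^sup>+ s. F m s \<partial>lborel)
        = ennreal (1/2 * c m * real (Suc m)) * ennreal (real (Suc m) * (2 * K))" by simp
    also have "\<dots> = ennreal (1/2 * c m * real (Suc m) * (real (Suc m) * (2 * K)))"
      by (rule ennreal_mult[symmetric]) (use K0 c0[of m] in auto)
    also have "1/2 * c m * real (Suc m) * (real (Suc m) * (2 * K)) = K * (c m * (real (Suc m))^2)"
      by (simp add: power2_eq_square)
    finally show "ennreal (1/2 * c m * real (Suc m)) * (\<integral>\<^sup>+ s. F m s \<partial>lborel) = ennreal (K * (c m * (real (Suc m))^2))" .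
  qed
  also have "\<dots> = ennreal (\<Sum>m. K * (c m * (real (Suc m))^2))"
  proof (rule suminf_ennreal2)
    show "\<And>m. 0 \<le> K * (c m * (real (Suc m))^2)" using c0 K0 by simp
    show "summable (\<lambda>m. K * (c m * (real (Suc m))^2))" using cs by (rule summable_mult)
  qed
  also have "\<dots> = ennreal (K * (\<Sum>m. c m * (real (Suc m))^2))"
    using cs by (simp add: suminf_mult)
  finally show ?thesis .
qed

lemma Aop_Wb:
  assumes M: "M > 0" and s: "\<bar>s\<bar> < L - real M / 2"
  shows "Aop M (Wb h L) s = h * real M"
proof -
  have "Aop M (Wb h L) s = set_lebesgue_integral lborel {-(real M)/2..(real M)/2} (\<lambda>t. h)"
    unfolding Aop_def
  proof (rule set_lebesgue_integral_cong)
    show "\<forall>x. x \<in> {-(real M)/2..(real M)/2} \<longrightarrow> Wb h L (s + x) = h"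
      using s by (auto simp: Wb_def indicator_def)
  qed simp
  also have "\<dots> = measure lborel {-(real M)/2..(real M)/2} *\<^sub>R h"
    by (rule set_integral_const) auto
  also have "\<dots> = h * real M" by simp
  finally show ?thesis .
qed

lemma P_lower:
  assumes L: "L > 0"
  shows "(\<Sum>m. ennreal (Psi \<Phi> \<nu> (Suc m) (h * real (Suc m)) * max 0 (2 * L - real (Suc m)))) \<le> Pfun \<Phi> \<nu> (Wb h L)"
proof -
  define J where "J m = {-(L - real (Suc m)/2)<..<L - real (Suc m)/2}" for m
  have pw: "(\<Sum>m. ennreal (Psi \<Phi> \<nu> (Suc m) (h * real (Suc m))) * indicator (J m) s)
      \<le> (\<Sum>m. ennreal (Psi \<Phi> \<nu> (Suc m) (Aop (Suc m) (Wb h L) s)))" for s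
  proof (rule suminf_le[OF _ summableI summableI])
    fix m
    show "ennreal (Psi \<Phi> \<nu> (Suc m) (h * real (Suc m))) * indicator (J m) s
        \<le> ennreal (Psi \<Phi> \<nu> (Suc m) (Aop (Suc m) (Wb h L) s))"
    proof (cases "s \<in> J m")
      case True
      then have "\<bar>s\<bar> < L - real (Suc m) / 2" by (auto simp: J_def)
      then show ?thesis using True Aop_Wb[of "Suc m" s L h] by simp
    qed simp
  qed
  have "(\<Sum>m. ennreal (Psi \<Phi> \<nu> (Suc m) (h * real (Suc m)) * max 0 (2 * L - real (Suc m))))
      = (\<Sum>m. \<integral>\<^sup>+s. ennreal (Psi \<Phi> \<nu> (Suc m) (h * real (Suc m))) * indicator (J m) s \<partial>lborel)"
  proof (intro suminf_cong)
    fix m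
    have "emeasure lborel (J m) = ennreal (max 0 (2 * L - real (Suc m)))"
    proof (cases "L - real (Suc m)/2 \<ge> 0")
      case True
      then show ?thesis by (simp add: J_def)
    next
      case False
      then have "J m = {}" unfolding J_def by (intro greaterThanLessThan_empty) linarith
      moreover have "max 0 (2 * L - real (Suc m)) = 0" using False by (simp add: max_def)
      ultimately show ?thesis by simp
    qed
    then show "ennreal (Psi \<Phi> \<nu> (Suc m) (h * real (Suc m)) * max 0 (2 * L - real (Suc m)))
      = (\<integral>\<^sup>+s. ennreal (Psi \<Phi> \<nu> (Suc m) (h * real (Suc m))) * indicator (J m) s \<partial>lborel)"
      by (simp add: nn_integral_cmult_indicator J_def ennreal_mult'')
  qed
  also have "\<dots> = (\<integral>\<^sup>+s. (\<Sum>m. ennreal (Psi \<Phi> \<nu> (Suc m) (h * real (Suc m))) * indicator (J m) s) \<partial>lborel)"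
    by (rule nn_integral_suminf[symmetric]) (simp add: J_def)
  also have "\<dots> \<le> Pfun \<Phi> \<nu> (Wb h L)"
    unfolding Pfun_def by (intro nn_integral_mono pw)
  finally show ?thesis .
qed

lemma key_max:
  fixes x e :: real
  assumes "0 < x" "0 < e" "e \<le> 1"
  shows "1 - x powr e \<le> max 0 (1 - x)"
proof (cases "x \<le> 1")
  case True
  have "x powr 1 \<le> x powr e" by (rule powr_mono') (use assms True in auto)
  then show ?thesis using assms by simp
next
  case False
  have "1 \<le> x powr e" by (rule ge_one_powr_ge_zero) (use assms False in auto)
  then show ?thesis by simp
qed

lemma powr_ident:
  fixes M L \<gamma> :: real
  assumes "M > 0" "L > 0"
  shows "M powr \<gamma> * (2*L) powr (2-\<gamma>) = M^2 * (M/(2*L)) powr (\<gamma>-2)"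
proof -
  have "M^2 * (M/(2*L)) powr (\<gamma>-2) = M powr 2 * (M powr (\<gamma>-2) / (2*L) powr (\<gamma>-2))"
    using assms by (simp add: powr_divide powr_numeral)
  also have "\<dots> = (M powr 2 * M powr (\<gamma>-2)) * (2*L) powr (2-\<gamma>)"
  proof -
    have "(2*L) powr (2-\<gamma>) = inverse ((2*L) powr (\<gamma>-2))" using powr_minus[of "2*L" "\<gamma>-2"] by simp
    then show ?thesis by (simp add: divide_inverse)
  qed
  also have "\<dots> = M powr \<gamma> * (2*L) powr (2-\<gamma>)"
    by (simp add: powr_add[symmetric])
  finally show ?thesis by simp
qed

lemma z_ge_w:
  fixes c K L h M \<gamma> :: real
  assumes c: "c \<ge> 0" and K: "K \<ge> 0" and L: "L > 0" and h: "h^2 = K / L" and M: "M \<ge> 1"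
    and g: "2 < \<gamma>" "\<gamma> \<le> 3"
  shows "K * (c * M^2) - K * (2*L) powr (2-\<gamma>) * (c * M powr \<gamma>) \<le> 1/2 * c * h^2 * M^2 * max 0 (2*L - M)"
proof -
  define x where "x = M / (2*L)"
  have x0: "x > 0" using M L by (simp add: x_def)
  have "1 - x powr (\<gamma>-2) \<le> max 0 (1 - x)" by (rule key_max) (use x0 g in auto)
  then have "K * c * M^2 * (1 - x powr (\<gamma>-2)) \<le> K * c * M^2 * max 0 (1 - x)"
    using K c by (intro mult_left_mono) auto
  moreover have "K * (c * M^2) - K * (2*L) powr (2-\<gamma>) * (c * M powr \<gamma>) = K * c * M^2 * (1 - x powr (\<gamma>-2))"
    using powr_ident[of M L \<gamma>] M L unfolding x_def by (simp add: algebra_simps)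
  moreover have "1/2 * c * h^2 * M^2 * max 0 (2*L - M) = K * c * M^2 * max 0 (1 - x)"
  proof -
    have "max 0 (2*L - M) = (2*L) * max 0 (1 - x)" using L unfolding x_def
      by (simp add: max_def field_simps)
    then show ?thesis using h L by (simp add: field_simps)
  qed
  ultimately show ?thesis by linarith
qed

theorem lemma2p9:
  fixes \<Phi> :: "nat \<Rightarrow> real \<Rightarrow> real" and \<nu> K \<gamma> :: real
  assumes nu: "\<nu> > 0"
    and K: "0 < K" "K < \<nu>\<^sup>2 / 2"
    and gamma: "5/2 < \<gamma>" "\<gamma> < 3"
    and C4: "\<And>m. m \<ge> 1 \<Longrightarrow> C4_nonneg (\<Phi> m)"
    and nonneg0: "\<And>m. m \<ge> 1 \<Longrightarrow> \<Phi> m 0 \<ge> 0"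
    and signs: "\<And>m s. m \<ge> 1 \<Longrightarrow> s > 0 \<Longrightarrow>
        \<Phi> m s \<ge> 0 \<and> hderiv (\<Phi> m) 1 s \<le> 0 \<and> hderiv (\<Phi> m) 2 s \<ge> 0 \<and>
        hderiv (\<Phi> m) 3 s \<le> 0 \<and> hderiv (\<Phi> m) 4 s \<ge> 0"
    and strict: "\<And>s. s > 0 \<Longrightarrow>
        \<Phi> 1 s > 0 \<and> hderiv (\<Phi> 1) 1 s < 0 \<and> hderiv (\<Phi> 1) 2 s > 0 \<and>
        hderiv (\<Phi> 1) 3 s < 0 \<and> hderiv (\<Phi> 1) 4 s > 0"
    and sum1: "summable (\<lambda>m. hderiv (\<Phi> (Suc m)) 1 (\<nu> * real (Suc m) - sqrt (2 * K * real (Suc m))) * real (Suc m))"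
    and sum2: "summable (\<lambda>m. hderiv (\<Phi> (Suc m)) 2 (\<nu> * real (Suc m) - sqrt (2 * K * real (Suc m))) * (real (Suc m))\<^sup>2)"
    and sum3: "summable (\<lambda>m. hderiv (\<Phi> (Suc m)) 2 (\<nu> * real (Suc m)) * real (Suc m) powr \<gamma>)"
    and sum4: "summable (\<lambda>m. hderiv (\<Phi> (Suc m)) 3 (\<nu> * real (Suc m) - sqrt (2 * K * real (Suc m))) * real (Suc m) powr (3/2))"
  shows "(SUP W\<in>coneK K. Qfun \<Phi> \<nu> W) < (SUP W\<in>coneK K. Pfun \<Phi> \<nu> W)"

proof -
  define c where "c m = hderiv (\<Phi> (Suc m)) 2 (\<nu> * real (Suc m))" for m
  have c0: "c m \<ge> 0" for m
    using signs[of "Suc m" "\<nu> * real (Suc m)"] nu by (simp add: c_def)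
  have sumg: "summable (\<lambda>m. c m * real (Suc m) powr \<gamma>)"
    using sum3 by (simp add: c_def)
  have sum2c: "summable (\<lambda>m. c m * (real (Suc m))^2)"
  proof (rule summable_comparison_test'[OF sumg])
    fix m :: nat
    have "real (Suc m) powr 2 \<le> real (Suc m) powr \<gamma>"
      by (rule powr_mono) (use gamma in auto)
    then have "(real (Suc m))^2 \<le> real (Suc m) powr \<gamma>"
      by (simp add: powr_numeral)
    then show "norm (c m * (real (Suc m))^2) \<le> c m * real (Suc m) powr \<gamma>"
      using c0[of m] by (simp add: mult_left_mono)
  qed
  define S where "S = (\<Sum>m. c m * (real (Suc m))^2)"
  define Sg where "Sg = (\<Sum>m. c m * real (Suc m) powr \<gamma>)"
  have Sg0: "Sg \<ge> 0" unfolding Sg_def using sumg c0 by (intro suminf_nonneg) auto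

  have Qle: "Qfun \<Phi> \<nu> W \<le> ennreal (K * S)" if W: "W \<in> coneK K" for W
    unfolding Qfun_def S_def using Qbound[OF W c0 sum2c] by (simp add: c_def)
  have SUPQ: "(SUP W\<in>coneK K. Qfun \<Phi> \<nu> W) \<le> ennreal (K * S)"
    by (rule SUP_least) (rule Qle)

  have Psi_lb: "Psi \<Phi> \<nu> M r \<ge> 1/2 * hderiv (\<Phi> M) 2 (\<nu> * real M) * r^2 - hderiv (\<Phi> M) 3 (\<nu> * real M) / 6 * r^3"
    if M: "M \<ge> 1" and r: "0 \<le> r" "r < \<nu> * real M" for M r
  proof -
    obtain d where d0: "d 0 = \<Phi> M"
      and da: "\<And>k x. k < 4 \<Longrightarrow> x > 0 \<Longrightarrow> (d k has_real_derivative d (Suc k) x) (at x)"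
      and hd: "\<And>k x. k \<le> 4 \<Longrightarrow> x > 0 \<Longrightarrow> hderiv (\<Phi> M) k x = d k x"
      using C4_derivs[OF C4[OF M]] by blast
    have d4: "d 4 x \<ge> 0" if "x > 0" for x
      using signs[OF M that] hd[of 4 x] that by simp
    have a0: "\<nu> * real M > 0" using nu M by simp
    have "\<Phi> M (\<nu> * real M - r) - \<Phi> M (\<nu> * real M) + d 1 (\<nu> * real M) * r
        \<ge> 1/2 * d 2 (\<nu> * real M) * r^2 - d 3 (\<nu> * real M) / 6 * r^3"
      by (rule taylor_bound[OF d0 da d4 r]) auto
    then show ?thesis using hd[of 1 "\<nu> * real M"] hd[of 2 "\<nu> * real M"] hd[of 3 "\<nu> * real M"] a0
      by (simp add: Psi_def)
  qed

  define \<delta> where "\<delta> = - hderiv (\<Phi> 1) 3 \<nu> / 6"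
  have \<delta>0: "\<delta> > 0" using strict[OF nu] by (simp add: \<delta>_def)

  have lim: "((\<lambda>L. Sg * 2 powr (2-\<gamma>) * L powr (5/2-\<gamma>)) \<longlongrightarrow> Sg * 2 powr (2-\<gamma>) * 0) at_top"
    by (intro tendsto_mult tendsto_const tendsto_neg_powr filterlim_ident) (use gamma in simp)
  have "eventually (\<lambda>L. Sg * 2 powr (2-\<gamma>) * L powr (5/2-\<gamma>) < \<delta> * sqrt K) at_top"
    using order_tendstoD(2)[OF lim] \<delta>0 K by simp
  moreover have "eventually (\<lambda>L::real. L \<ge> 1) at_top" by (rule eventually_ge_at_top)
  moreover have "eventually (\<lambda>L::real. L > K / \<nu>^2) at_top" by (rule eventually_gt_at_top)
  ultimately have "eventually (\<lambda>L. Sg * 2 powr (2-\<gamma>) * L powr (5/2-\<gamma>) < \<delta> * sqrt K \<and> L \<ge> 1 \<and> L > K / \<nu>^2) at_top"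
    by eventually_elim auto
  then obtain L where Lc: "Sg * 2 powr (2-\<gamma>) * L powr (5/2-\<gamma>) < \<delta> * sqrt K" and L1: "L \<ge> 1" and LK: "L > K / \<nu>^2"
    by (auto simp: eventually_at_top_linorder)
  have L0: "L > 0" using L1 by simp
  define h where "h = sqrt (K / L)"
  have h0: "h > 0" using K L0 by (simp add: h_def)
  have h2: "h^2 = K / L" using K L0 by (simp add: h_def)
  have hnu: "h < \<nu>"
  proof -
    have "K / L < \<nu>^2" using LK L0 nu by (simp add: field_simps)
    then have "h^2 < \<nu>^2" using h2 by simp
    then show ?thesis using nu by (rule power2_less_imp_less[OF _ less_imp_le])
  qed
  have WinK: "Wb h L \<in> coneK K"
    by (rule Wb_coneK) (use h0 L0 h2 in auto)

  define x where "x m = Psi \<Phi> \<nu> (Suc m) (h * real (Suc m)) * max 0 (2 * L - real (Suc m))" for m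
  define z where "z m = 1/2 * c m * h^2 * (real (Suc m))^2 * max 0 (2 * L - real (Suc m))" for m
  define G where "G = \<delta> * h^3 * (2 * L - 1)"
  define y where "y m = z m + (if m = 0 then G else 0)" for m
  have G0: "G \<ge> 0" using \<delta>0 h0 L1 by (simp add: G_def)
  have z0: "z m \<ge> 0" for m using c0[of m] by (simp add: z_def)
  have y0: "y m \<ge> 0" for m using z0[of m] G0 by (simp add: y_def)
  have xy: "y m \<le> x m" for m
  proof -
    define M where "M = Suc m"
    have M1: "M \<ge> 1" by (simp add: M_def)
    have r: "0 \<le> h * real M" "h * real M < \<nu> * real M"
      using h0 hnu M1 by auto
    have d3: "hderiv (\<Phi> M) 3 (\<nu> * real M) \<le> 0"
      using signs[OF M1, of "\<nu> * real M"] nu M1 by simp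
    have lb: "Psi \<Phi> \<nu> M (h * real M) \<ge> 1/2 * c m * (h * real M)^2 + (- hderiv (\<Phi> M) 3 (\<nu> * real M) / 6) * (h * real M)^3"
      using Psi_lb[OF M1 r] by (simp add: c_def M_def)
    have mx: "max 0 (2 * L - real M) \<ge> 0" by simp
    show ?thesis
    proof (cases "m = 0")
      case True
      then have M: "M = 1" by (simp add: M_def)
      have "y m = (1/2 * c m * h^2 + \<delta> * h^3) * (2 * L - 1)"
        using True L1 by (simp add: y_def z_def G_def algebra_simps)
      also have "\<dots> \<le> Psi \<Phi> \<nu> M (h * real M) * (2 * L - 1)"
        using lb M L1 by (intro mult_right_mono) (auto simp: \<delta>_def)
      also have "\<dots> = x m" using True M L1 by (simp add: x_def M_def)
      finally show ?thesis .
    next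
      case False
      have p3: "(h * real M)^3 \<ge> 0" using r(1) by simp
      have "(- hderiv (\<Phi> M) 3 (\<nu> * real M) / 6) * (h * real M)^3 \<ge> 0"
        using d3 p3 by (intro mult_nonneg_nonneg) auto
      then have "1/2 * c m * (h * real M)^2 \<le> Psi \<Phi> \<nu> M (h * real M)" using lb by linarith
      then have "1/2 * c m * (h * real M)^2 * max 0 (2 * L - real M) \<le> Psi \<Phi> \<nu> M (h * real M) * max 0 (2 * L - real M)"
        by (rule mult_right_mono) simp
      then show ?thesis using False by (simp add: y_def z_def x_def M_def power_mult_distrib mult_ac)
    qed
  qed
  have zsum: "summable z"
  proof (rule summable_comparison_test'[where g="\<lambda>m. (h^2 * L) * (c m * (real (Suc m))^2)"])
    show "summable (\<lambda>m. (h^2 * L) * (c m * (real (Suc m))^2))" by (rule summable_mult[OF sum2c])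
    fix m :: nat
    have "max 0 (2 * L - real (Suc m)) \<le> 2 * L" using L0 by simp
    then have "1/2 * (c m * h^2 * (real (Suc m))^2) * max 0 (2 * L - real (Suc m)) \<le> 1/2 * (c m * h^2 * (real (Suc m))^2) * (2 * L)"
      using c0[of m] by (intro mult_left_mono) auto
    then show "norm (z m) \<le> (h^2 * L) * (c m * (real (Suc m))^2)"
      using z0[of m] by (simp add: z_def mult_ac)
  qed
  have ysums: "y sums (suminf z + G)"
    unfolding y_def using sums_add[OF summable_sums[OF zsum] sums_single[of 0 "\<lambda>_. G"]] by simp
  define w where "w m = K * (c m * (real (Suc m))^2) - K * (2*L) powr (2-\<gamma>) * (c m * real (Suc m) powr \<gamma>)" for m
  have wz: "w m \<le> z m" for m
    unfolding w_def z_def using z_ge_w[OF c0[of m] _ L0 h2, of "real (Suc m)" \<gamma>] K gamma by simp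
  have wsum: "w sums (K * S - K * (2*L) powr (2-\<gamma>) * Sg)"
    unfolding w_def S_def Sg_def
    by (intro sums_diff sums_mult summable_sums sum2c sumg)
  have "K * S - K * (2*L) powr (2-\<gamma>) * Sg \<le> suminf z"
    using sums_le[OF wz wsum summable_sums[OF zsum]] .
  have gain: "K * (2*L) powr (2-\<gamma>) * Sg < G"
  proof -
    have sL: "sqrt L > 0" using L0 by simp
    have "(2*L) powr (2-\<gamma>) * sqrt L = 2 powr (2-\<gamma>) * L powr (5/2-\<gamma>)"
    proof -
      have "L powr (5/2-\<gamma>) = L powr (2-\<gamma>) * L powr (1/2)" by (simp add: powr_add[symmetric])
      then show ?thesis using L0 by (simp add: powr_mult powr_half_sqrt)
    qed
    then have "Sg * (2*L) powr (2-\<gamma>) * sqrt L < \<delta> * sqrt K" using Lc by (simp add: mult_ac)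
    then have "K * (Sg * (2*L) powr (2-\<gamma>) * sqrt L) < K * (\<delta> * sqrt K)"
      using K by simp
    moreover have "K * (\<delta> * sqrt K) = \<delta> * h^3 * L * sqrt L"
    proof -
      have "h^3 * L * sqrt L = h^2 * L * (h * sqrt L)" by (simp add: power3_eq_cube power2_eq_square)
      also have "h * sqrt L = sqrt K" using L0 K by (simp add: h_def real_sqrt_divide)
      finally show ?thesis using h2 L0 by simp
    qed
    ultimately have "K * (2*L) powr (2-\<gamma>) * Sg * sqrt L < \<delta> * h^3 * L * sqrt L"
      by (simp add: mult_ac)
    then have "K * (2*L) powr (2-\<gamma>) * Sg < \<delta> * h^3 * L"
      using sL by simp
    also have "\<delta> * h^3 * L \<le> G"
      unfolding G_def using \<delta>0 h0 L1 by (intro mult_left_mono) auto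
    finally show ?thesis .
  qed
  have KSlt: "K * S < suminf z + G"
    using gain \<open>K * S - K * (2*L) powr (2-\<gamma>) * Sg \<le> suminf z\<close> by linarith
  have "ennreal (K * S) < ennreal (suminf z + G)"
  proof -
    have S0: "S \<ge> 0" unfolding S_def using sum2c c0 by (intro suminf_nonneg) auto
    show ?thesis using KSlt K S0 by (subst ennreal_less_iff) auto
  qed
  also have "ennreal (suminf z + G) = (\<Sum>m. ennreal (y m))"
    using suminf_ennreal2[OF y0 sums_summable[OF ysums]] sums_unique[OF ysums] by simp
  also have "\<dots> \<le> (\<Sum>m. ennreal (x m))"
    by (intro suminf_le[OF _ summableI summableI] ennreal_leI xy)
  also have "\<dots> \<le> Pfun \<Phi> \<nu> (Wb h L)"
    using P_lower[OF L0, of \<Phi> \<nu> h] by (simp add: x_def)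
  also have "\<dots> \<le> (SUP W\<in>coneK K. Pfun \<Phi> \<nu> W)"
    using WinK by (rule SUP_upper)
  finally show ?thesis using SUPQ by (rule order.strict_trans1[rotated])
qed

end
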